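(* If $\tau\in\mathcal{T}$ and $(\mathbb{R},\tau)$ is locally connected, then $(\mathbb{R},\tau)$ is locally compact and completely metrizable, and $\Gamma(\tau)$ is closed in the Euclidean topology. Moreover, $\Gamma(\tau)$ is countable if and only if $(\mathbb{R},\tau)$ is second countable.
   Context: $\eta$ denotes the Euclidean topology on $\mathbb{R}$; $\mathcal{T}$ is the family of all topologies on $\mathbb{R}$ finer than $\eta$. $\Gamma(\tau)=\{x\in\mathbb{R}:\mathcal{U}_\eta(x)\neq\mathcal{U}_\tau(x)\}$ where $\mathcal{U}_\tau(x)$ is the neighborhood filter of $x$ in $\tau$. *)

theory Defs
  imports "HOL-Analysis.Analysis"
begin

definition finer_than_euclidean :: "real topology \<Rightarrow> bool" where
  "finer_than_euclidean \<tau> \<longleftrightarrow> topspace \<tau> = UNIV \<and> (\<forall>U. open U \<longrightarrow> openin \<tau> U)"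

definition Gamma :: "real topology \<Rightarrow> real set" where
  "Gamma \<tau> = {x. nhdsin euclideanreal x \<noteq> nhdsin \<tau> x}"

end

theory Submission
  imports Defs
begin

locale LCR =
  fixes T :: "real topology"
  assumes fin: "finer_than_euclidean T"
    and lc: "locally_connected_space T"
begin

definition L where "L z \<longleftrightarrow> (\<exists>U. openin T U \<and> z \<in> U \<and> U \<subseteq> {z..})"
definition R where "R z \<longleftrightarrow> (\<exists>U. openin T U \<and> z \<in> U \<and> U \<subseteq> {..z})"

lemma top: "topspace T = UNIV" using fin by (simp add: finer_than_euclidean_def)
lemma opn: "open U \<Longrightarrow> openin T U" using fin by (simp add: finer_than_euclidean_def)

lemma openin_inter_open: "openin T U \<Longrightarrow> open V \<Longrightarrow> openin T (U \<inter> V)"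
  using opn by blast

lemma contid: "continuous_map T euclideanreal id"
  by (simp add: continuous_map_def top opn)

lemma conn_interval: "connectedin T C \<Longrightarrow> is_interval C"
proof -
  assume "connectedin T C"
  then have "connectedin euclideanreal (id ` C)"
    using connectedin_continuous_map_image contid by blast
  then show ?thesis by (simp add: is_interval_connected_1)
qed

lemma lcE:
  assumes "openin T V" "x \<in> V"
  obtains U where "openin T U" "connectedin T U" "x \<in> U" "U \<subseteq> V"
  using lc assms unfolding locally_connected_space by blast

lemma interval_between:
  fixes C :: "real set"
  assumes "is_interval C" "a \<in> C" "b \<in> C" "a \<le> y" "y \<le> b"
  shows "y \<in> C"
  using assms unfolding is_interval_1 by blast

lemma conn_noL:
  assumes C: "connectedin T C" and a: "a \<in> C" and b: "b \<in> C" and az: "a < z" and zb: "z < b"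
  shows "\<not> L z"
proof
  assume "L z"
  then obtain U where U: "openin T U" "z \<in> U" "U \<subseteq> {z..}" unfolding L_def by blast
  have zC: "z \<in> C" using interval_between[OF conn_interval[OF C] a b] az zb by simp
  have o1: "openin T {..<z}" by (rule opn) simp
  have o2: "openin T ({z<..} \<union> U)" using U opn[of "{z<..}"] by auto
  have "C \<subseteq> {..<z} \<union> {z<..} \<union> {z}" by auto
  then have "C \<subseteq> {..<z} \<union> ({z<..} \<union> U)" using U(2) by blast
  moreover have "{..<z} \<inter> ({z<..} \<union> U) \<inter> C = {}" using U by auto
  moreover have "{..<z} \<inter> C \<noteq> {}" using a az by auto
  moreover have "({z<..} \<union> U) \<inter> C \<noteq> {}" using zC U by auto
  ultimately show False using C o1 o2 unfolding connectedin by blast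
qed

lemma conn_noR:
  assumes C: "connectedin T C" and a: "a \<in> C" and b: "b \<in> C" and az: "a < z" and zb: "z < b"
  shows "\<not> R z"
proof
  assume "R z"
  then obtain U where U: "openin T U" "z \<in> U" "U \<subseteq> {..z}" unfolding R_def by blast
  have zC: "z \<in> C" using interval_between[OF conn_interval[OF C] a b] az zb by simp
  have o1: "openin T {z<..}" by (rule opn) simp
  have o2: "openin T ({..<z} \<union> U)" using U opn[of "{..<z}"] by auto
  have "C \<subseteq> {..<z} \<union> {z<..} \<union> {z}" by auto
  then have "C \<subseteq> {z<..} \<union> ({..<z} \<union> U)" using U(2) by blast
  moreover have "{z<..} \<inter> ({..<z} \<union> U) \<inter> C = {}" using U by auto
  moreover have "{z<..} \<inter> C \<noteq> {}" using b zb by auto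
  moreover have "({..<z} \<union> U) \<inter> C \<noteq> {}" using zC U by auto
  ultimately show False using C o1 o2 unfolding connectedin by blast
qed

lemma ball_in:
  assumes "\<not> L y" "\<not> R y" "openin T S" "y \<in> S"
  shows "\<exists>e>0. {y-e<..<y+e} \<subseteq> S"
proof -
  obtain U where U: "openin T U" "connectedin T U" "y \<in> U" "U \<subseteq> S" using lcE assms(3,4) by blast
  have "\<not> U \<subseteq> {y..}" using assms(1) U unfolding L_def by blast
  then obtain a where a: "a \<in> U" "a < y" by force
  have "\<not> U \<subseteq> {..y}" using assms(2) U unfolding R_def by blast
  then obtain b where b: "b \<in> U" "y < b" by force
  have "{a..b} \<subseteq> U" using interval_between[OF conn_interval[OF U(2)] a(1) b(1)] by auto
  moreover have "{y - min (y-a) (b-y)<..<y + min (y-a) (b-y)} \<subseteq> {a..b}" by auto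
  ultimately have "{y - min (y-a) (b-y)<..<y + min (y-a) (b-y)} \<subseteq> S" using U(4) by blast
  then show ?thesis using a b by (intro exI[of _ "min (y-a) (b-y)"]) auto
qed

definition G where "G = {z. L z \<or> R z}"

lemma LR_open: "L x \<Longrightarrow> R x \<Longrightarrow> openin T {x}"
proof -
  assume "L x" "R x"
  then obtain U V where "openin T U" "x \<in> U" "U \<subseteq> {x..}" "openin T V" "x \<in> V" "V \<subseteq> {..x}"
    unfolding L_def R_def by blast
  then have "U \<inter> V = {x}"
    by (auto simp: subset_iff) (meson atLeast_iff atMost_iff order_antisym)
  then show ?thesis using \<open>openin T U\<close> \<open>openin T V\<close> by (metis openin_Int)
qed

lemma Lonly:
  assumes "L x" "\<not> R x" "openin T S" "x \<in> S"
  shows "\<exists>c>x. {x..c} \<subseteq> S \<and> openin T {x..<c} \<and> (\<forall>z. x < z \<and> z < c \<longrightarrow> \<not> L z \<and> \<not> R z)"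
proof -
  obtain U where U: "openin T U" "x \<in> U" "U \<subseteq> {x..}" using assms(1) unfolding L_def by blast
  obtain u where u: "openin T u" "connectedin T u" "x \<in> u" "u \<subseteq> U \<inter> S"
    using lcE[of "U \<inter> S" x] U assms(3,4) by blast
  have "\<not> u \<subseteq> {..x}" using assms(2) u unfolding R_def by blast
  then obtain c where c: "c \<in> u" "x < c" by force
  have xc: "{x..c} \<subseteq> u" using interval_between[OF conn_interval[OF u(2)] u(3) c(1)] by auto
  have "u \<inter> {..<c} = {x..<c}" using xc u(4) U(3) by auto
  then have "openin T {x..<c}" using openin_inter_open[OF u(1), of "{..<c}"] by simp
  moreover have "\<forall>z. x < z \<and> z < c \<longrightarrow> \<not> L z \<and> \<not> R z"
    using conn_noL[OF u(2) u(3) c(1)] conn_noR[OF u(2) u(3) c(1)] by blast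
  ultimately show ?thesis using xc u(4) c(2) by blast
qed

lemma Ronly:
  assumes "R x" "\<not> L x" "openin T S" "x \<in> S"
  shows "\<exists>c<x. {c..x} \<subseteq> S \<and> openin T {c<..x} \<and> (\<forall>z. c < z \<and> z < x \<longrightarrow> \<not> L z \<and> \<not> R z)"
proof -
  obtain U where U: "openin T U" "x \<in> U" "U \<subseteq> {..x}" using assms(1) unfolding R_def by blast
  obtain u where u: "openin T u" "connectedin T u" "x \<in> u" "u \<subseteq> U \<inter> S"
    using lcE[of "U \<inter> S" x] U assms(3,4) by blast
  have "\<not> u \<subseteq> {x..}" using assms(2) u unfolding L_def by blast
  then obtain c where c: "c \<in> u" "c < x" by force
  have xc: "{c..x} \<subseteq> u" using interval_between[OF conn_interval[OF u(2)] c(1) u(3)] by auto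
  have "u \<inter> {c<..} = {c<..x}" using xc u(4) U(3) by auto
  then have "openin T {c<..x}" using openin_inter_open[OF u(1), of "{c<..}"] by simp
  moreover have "\<forall>z. c < z \<and> z < x \<longrightarrow> \<not> L z \<and> \<not> R z"
    using conn_noL[OF u(2) c(1) u(3)] conn_noR[OF u(2) c(1) u(3)] by blast
  ultimately show ?thesis using xc u(4) c(2) by blast
qed

lemma G_free_nbhd:
  assumes "\<not> L y" "\<not> R y"
  shows "\<exists>e>0. \<forall>z. \<bar>z - y\<bar> < e \<longrightarrow> \<not> L z \<and> \<not> R z"
proof -
  obtain U where U: "openin T U" "connectedin T U" "y \<in> U" "U \<subseteq> UNIV"
    using lcE[of UNIV y] top by (metis UNIV_I openin_topspace)
  have "\<not> U \<subseteq> {y..}" using assms(1) U unfolding L_def by blast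
  then obtain a where a: "a \<in> U" "a < y" by force
  have "\<not> U \<subseteq> {..y}" using assms(2) U unfolding R_def by blast
  then obtain b where b: "b \<in> U" "y < b" by force
  have "\<forall>z. \<bar>z - y\<bar> < min (y-a) (b-y) \<longrightarrow> \<not> L z \<and> \<not> R z"
  proof (intro allI impI)
    fix z assume "\<bar>z - y\<bar> < min (y-a) (b-y)"
    then have "a < z" "z < b" by auto
    then show "\<not> L z \<and> \<not> R z" using conn_noL[OF U(2) a(1) b(1)] conn_noR[OF U(2) a(1) b(1)] by blast
  qed
  then show ?thesis using a b by (intro exI[of _ "min (y-a) (b-y)"]) auto
qed

lemma G_closed: "closed G"
  unfolding closed_def open_dist
proof (intro ballI)
  fix y assume "y \<in> - G"
  then have "\<not> L y" "\<not> R y" unfolding G_def by auto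
  then obtain e where "e>0" "\<forall>z. \<bar>z - y\<bar> < e \<longrightarrow> \<not> L z \<and> \<not> R z" using G_free_nbhd by blast
  then show "\<exists>e>0. \<forall>z. dist z y < e \<longrightarrow> z \<in> - G" unfolding G_def dist_real_def by auto
qed

lemma Gamma_eq: "Gamma T = G"
proof (rule set_eqI)
  fix z
  show "z \<in> Gamma T \<longleftrightarrow> z \<in> G"
  proof
    assume "z \<in> Gamma T"
    show "z \<in> G"
    proof (rule ccontr)
      assume "z \<notin> G"
      then have nl: "\<not> L z" "\<not> R z" unfolding G_def by auto
      have "nhdsin euclideanreal z = nhdsin T z"
      proof (rule filter_eq_iff[THEN iffD2], intro allI)
        fix P
        show "eventually P (nhdsin euclideanreal z) = eventually P (nhdsin T z)"
          unfolding eventually_nhdsin top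
        proof
          assume "z \<notin> topspace euclideanreal \<or> (\<exists>S. openin euclideanreal S \<and> z \<in> S \<and> (\<forall>x\<in>S. P x))"
          then show "z \<notin> UNIV \<or> (\<exists>S. openin T S \<and> z \<in> S \<and> (\<forall>x\<in>S. P x))" using opn by auto
        next
          assume "z \<notin> UNIV \<or> (\<exists>S. openin T S \<and> z \<in> S \<and> (\<forall>x\<in>S. P x))"
          then obtain S where S: "openin T S" "z \<in> S" "\<forall>x\<in>S. P x" by auto
          obtain e where "e>0" "{z-e<..<z+e} \<subseteq> S" using ball_in[OF nl S(1,2)] by blast
          then show "z \<notin> topspace euclideanreal \<or> (\<exists>S. openin euclideanreal S \<and> z \<in> S \<and> (\<forall>x\<in>S. P x))"
            using S(3) by (intro disjI2 exI[of _ "{z-e<..<z+e}"]) auto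
        qed
      qed
      then show False using \<open>z \<in> Gamma T\<close> unfolding Gamma_def by simp
    qed
  next
    assume "z \<in> G"
    then obtain U where U: "openin T U" "z \<in> U" "U \<subseteq> {z..} \<or> U \<subseteq> {..z}"
      unfolding G_def L_def R_def by blast
    have "eventually (\<lambda>x. x \<in> U) (nhdsin T z)" unfolding eventually_nhdsin using U by blast
    moreover have "\<not> eventually (\<lambda>x. x \<in> U) (nhdsin euclideanreal z)"
    proof
      assume "eventually (\<lambda>x. x \<in> U) (nhdsin euclideanreal z)"
      then obtain S where S: "open S" "z \<in> S" "S \<subseteq> U" unfolding eventually_nhdsin by auto
      then obtain e where e: "e>0" "\<forall>y. dist y z < e \<longrightarrow> y \<in> S" unfolding open_dist by blast
      have "z - e/2 \<in> U" "z + e/2 \<in> U" using e S(3) by (auto simp: dist_real_def)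
      then show False using U(3) e(1) by auto
    qed
    ultimately show "z \<in> Gamma T" unfolding Gamma_def by auto
  qed
qed

lemma compact_via:
  assumes K: "compact K"
    and H: "\<And>S y. openin T S \<Longrightarrow> y \<in> K \<Longrightarrow> y \<in> S \<Longrightarrow> \<exists>e>0. \<forall>y'\<in>K. \<bar>y' - y\<bar> < e \<longrightarrow> y' \<in> S"
  shows "compactin T K"
proof -
  have "continuous_map (top_of_set K) T id"
    unfolding continuous_map_def
  proof (intro conjI allI impI)
    show "id \<in> topspace (top_of_set K) \<rightarrow> topspace T" using top by auto
  next
    fix S assume S: "openin T S"
    have "{x \<in> topspace (top_of_set K). id x \<in> S} = K \<inter> S" by auto
    moreover have "openin (top_of_set K) (K \<inter> S)"
      unfolding openin_euclidean_subtopology_iff dist_real_def using H[OF S] by auto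
    ultimately show "openin (top_of_set K) {x \<in> topspace (top_of_set K). id x \<in> S}" by simp
  qed
  moreover have "compactin (top_of_set K) K" using K by (simp add: compactin_subtopology)
  ultimately show ?thesis using image_compactin by fastforce
qed

lemma loc_compact: "locally_compact_space T"
  unfolding locally_compact_space_def
proof (intro ballI)
  fix x assume "x \<in> topspace T"
  consider "\<not> L x" "\<not> R x" | "L x" "R x" | "L x" "\<not> R x" | "R x" "\<not> L x" by blast
  then show "\<exists>U K. openin T U \<and> compactin T K \<and> x \<in> U \<and> U \<subseteq> K"
  proof cases
    case 1
    obtain e where e: "e>0" "\<forall>z. \<bar>z - x\<bar> < e \<longrightarrow> \<not> L z \<and> \<not> R z" using G_free_nbhd[OF 1] by blast
    have "compactin T {x-e/2..x+e/2}"
    proof (rule compact_via)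
      fix S y assume "openin T S" "y \<in> {x-e/2..x+e/2}" "y \<in> S"
      moreover have "\<not> L y" "\<not> R y" using e calculation(2) by auto
      ultimately obtain d where "d>0" "{y-d<..<y+d} \<subseteq> S" using ball_in by blast
      then show "\<exists>d>0. \<forall>y'\<in>{x-e/2..x+e/2}. \<bar>y' - y\<bar> < d \<longrightarrow> y' \<in> S"
        by (intro exI[of _ d]) (force simp: subset_iff abs_less_iff)
    qed simp
    moreover have "openin T {x-e/2<..<x+e/2}" by (rule opn) simp
    ultimately show ?thesis using e(1) by (intro exI[of _ "{x-e/2<..<x+e/2}"] exI[of _ "{x-e/2..x+e/2}"]) auto
  next
    case 2
    have "compactin T {x}" by (rule compact_via) (auto intro: exI[of _ 1])
    then show ?thesis using LR_open[OF 2] by blast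
  next
    case 3
    obtain c where c: "c > x" "openin T {x..<c}" "\<forall>z. x < z \<and> z < c \<longrightarrow> \<not> L z \<and> \<not> R z"
      using Lonly[OF 3, of UNIV] top by (metis UNIV_I openin_topspace)
    define m where "m = (x + c) / 2"
    have m: "x < m" "m < c" using c(1) by (auto simp: m_def)
    have "{x..<c} \<inter> {..<m} = {x..<m}" using m by auto
    then have oU: "openin T {x..<m}" using openin_inter_open[OF c(2), of "{..<m}"] by simp
    have "compactin T {x..m}"
    proof (rule compact_via)
      fix S y assume S: "openin T S" "y \<in> {x..m}" "y \<in> S"
      show "\<exists>d>0. \<forall>y'\<in>{x..m}. \<bar>y' - y\<bar> < d \<longrightarrow> y' \<in> S"
      proof (cases "y = x")
        case True
        obtain c' where "c' > x" "{x..c'} \<subseteq> S" using Lonly[OF 3 S(1)] S(3) True by blast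
        then show ?thesis using True by (intro exI[of _ "c' - x"]) auto
      next
        case False
        then have "x < y" "y < c" using S(2) m by auto
        then have "\<not> L y" "\<not> R y" using c(3) by auto
        then obtain d where "d>0" "{y-d<..<y+d} \<subseteq> S" using ball_in S by blast
        then show ?thesis by (intro exI[of _ d]) (force simp: subset_iff abs_less_iff)
      qed
    qed simp
    then show ?thesis using oU m by (intro exI[of _ "{x..<m}"] exI[of _ "{x..m}"]) auto
  next
    case 4
    obtain c where c: "c < x" "openin T {c<..x}" "\<forall>z. c < z \<and> z < x \<longrightarrow> \<not> L z \<and> \<not> R z"
      using Ronly[OF 4, of UNIV] top by (metis UNIV_I openin_topspace)
    define m where "m = (x + c) / 2"
    have m: "m < x" "c < m" using c(1) by (auto simp: m_def)
    have "{c<..x} \<inter> {m<..} = {m<..x}" using m by auto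
    then have oU: "openin T {m<..x}" using openin_inter_open[OF c(2), of "{m<..}"] by simp
    have "compactin T {m..x}"
    proof (rule compact_via)
      fix S y assume S: "openin T S" "y \<in> {m..x}" "y \<in> S"
      show "\<exists>d>0. \<forall>y'\<in>{m..x}. \<bar>y' - y\<bar> < d \<longrightarrow> y' \<in> S"
      proof (cases "y = x")
        case True
        obtain c' where "c' < x" "{c'..x} \<subseteq> S" using Ronly[OF 4 S(1)] S(3) True by blast
        then show ?thesis using True by (intro exI[of _ "x - c'"]) auto
      next
        case False
        then have "y < x" "c < y" using S(2) m by auto
        then have "\<not> L y" "\<not> R y" using c(3) by auto
        then obtain d where "d>0" "{y-d<..<y+d} \<subseteq> S" using ball_in S by blast
        then show ?thesis by (intro exI[of _ d]) (force simp: subset_iff abs_less_iff)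
      qed
    qed simp
    then show ?thesis using oU m by (intro exI[of _ "{m<..x}"] exI[of _ "{m..x}"]) auto
  qed
qed

definition cut where
  "cut x y \<longleftrightarrow> (\<exists>w. (min x y < w \<and> w \<le> max x y \<and> L w) \<or> (min x y \<le> w \<and> w < max x y \<and> R w))"

definition dd where "dd x y = \<bar>x - y\<bar> + (if cut x y then 1 else 0)"

lemma cut_commute: "cut x y = cut y x"
  unfolding cut_def by (simp add: min.commute max.commute)

lemma cut_refl: "\<not> cut x x"
  unfolding cut_def by auto

lemma cut_tri: "cut x z \<Longrightarrow> cut x y \<or> cut y z"
proof -
  assume "cut x z"
  then obtain w where w: "(min x z < w \<and> w \<le> max x z \<and> L w) \<or> (min x z \<le> w \<and> w < max x z \<and> R w)"
    unfolding cut_def by blast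
  have a: "min x z < w \<Longrightarrow> w \<le> max x z \<Longrightarrow> (min x y < w \<and> w \<le> max x y) \<or> (min y z < w \<and> w \<le> max y z)"
    by (auto simp: min_def max_def split: if_splits)
  have b: "min x z \<le> w \<Longrightarrow> w < max x z \<Longrightarrow> (min x y \<le> w \<and> w < max x y) \<or> (min y z \<le> w \<and> w < max y z)"
    by (auto simp: min_def max_def split: if_splits)
  show ?thesis using w a b unfolding cut_def by blast
qed

lemma metric: "Metric_space UNIV dd"
proof
  fix x y z :: real
  show "0 \<le> dd x y" unfolding dd_def by auto
  show "dd x y = dd y x" unfolding dd_def by (simp add: cut_commute abs_minus_commute)
  show "dd x y = 0 \<longleftrightarrow> x = y" unfolding dd_def by (auto simp: cut_refl)
  show "dd x z \<le> dd x y + dd y z"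
    using cut_tri[of x z y] abs_triangle_ineq[of "x - y" "y - z"] unfolding dd_def by auto
qed

lemma mball_eq:
  assumes "0 < r" "r \<le> 1"
  shows "Metric_space.mball UNIV dd x r = {y. \<bar>x - y\<bar> < r \<and> \<not> cut x y}"
  using assms unfolding Metric_space.mball_def[OF metric] dd_def by auto

lemma mtop_eq: "Metric_space.mtopology UNIV dd = T"
proof (rule topology_eq[THEN iffD2], intro allI)
  fix S
  show "openin (Metric_space.mtopology UNIV dd) S = openin T S"
    unfolding Metric_space.openin_mtopology[OF metric]
  proof (intro iffI)
    assume H: "S \<subseteq> UNIV \<and> (\<forall>x. x \<in> S \<longrightarrow> (\<exists>r>0. Metric_space.mball UNIV dd x r \<subseteq> S))"
    show "openin T S"
    proof (subst openin_subopen, intro ballI)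
      fix x assume x: "x \<in> S"
      then obtain r0 where r0: "r0 > 0" "Metric_space.mball UNIV dd x r0 \<subseteq> S" using H by blast
      define r where "r = min r0 1"
      have r: "0 < r" "r \<le> 1" using r0 by (auto simp: r_def)
      have rS: "\<And>y. \<bar>x - y\<bar> < r \<Longrightarrow> \<not> cut x y \<Longrightarrow> y \<in> S"
      proof -
        fix y assume "\<bar>x - y\<bar> < r" "\<not> cut x y"
        then have "y \<in> Metric_space.mball UNIV dd x r" using mball_eq[OF r] by auto
        moreover have "Metric_space.mball UNIV dd x r \<subseteq> Metric_space.mball UNIV dd x r0"
          unfolding Metric_space.mball_def[OF metric] r_def by auto
        ultimately show "y \<in> S" using r0 by blast
      qed
      consider "\<not> L x" "\<not> R x" | "L x" "R x" | "L x" "\<not> R x" | "R x" "\<not> L x" by blast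
      then show "\<exists>T0. openin T T0 \<and> x \<in> T0 \<and> T0 \<subseteq> S"
      proof cases
        case 1
        obtain e where e: "e>0" "\<forall>z. \<bar>z - x\<bar> < e \<longrightarrow> \<not> L z \<and> \<not> R z" using G_free_nbhd[OF 1] by blast
        define m where "m = min e r"
        have "{x-m<..<x+m} \<subseteq> S"
        proof
          fix y assume y: "y \<in> {x-m<..<x+m}"
          have "\<not> cut x y"
          proof
            assume "cut x y"
            then obtain w where w: "(min x y < w \<and> w \<le> max x y \<and> L w) \<or> (min x y \<le> w \<and> w < max x y \<and> R w)"
              unfolding cut_def by blast
            then have "\<bar>w - x\<bar> < e" using y by (auto simp: m_def min_def max_def abs_if split: if_splits)
            then show False using e w by blast
          qed
          moreover have "\<bar>x - y\<bar> < r" using y by (auto simp: m_def abs_less_iff)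
          ultimately show "y \<in> S" using rS by blast
        qed
        moreover have "openin T {x-m<..<x+m}" by (rule opn) simp
        ultimately show ?thesis using e(1) r(1) by (intro exI[of _ "{x-m<..<x+m}"]) (auto simp: m_def)
      next
        case 2
        then show ?thesis using LR_open x by blast
      next
        case 3
        obtain c where c: "c > x" "openin T {x..<c}" "\<forall>z. x < z \<and> z < c \<longrightarrow> \<not> L z \<and> \<not> R z"
          using Lonly[OF 3, of UNIV] top by (metis UNIV_I openin_topspace)
        have "{x..<c} \<inter> {..<x+r} \<subseteq> S"
        proof
          fix y assume y: "y \<in> {x..<c} \<inter> {..<x+r}"
          have "\<not> cut x y"
          proof
            assume "cut x y"
            then obtain w where w: "(min x y < w \<and> w \<le> max x y \<and> L w) \<or> (min x y \<le> w \<and> w < max x y \<and> R w)"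
              unfolding cut_def by blast
            then have "(x < w \<and> w < c) \<or> (w = x \<and> R w)" using y by (auto simp: min_def max_def split: if_splits)
            then show False using c(3) 3 w by blast
          qed
          then show "y \<in> S" using rS y by auto
        qed
        moreover have "openin T ({x..<c} \<inter> {..<x+r})" using openin_inter_open[OF c(2)] by simp
        ultimately show ?thesis using c(1) r(1) by (intro exI[of _ "{x..<c} \<inter> {..<x+r}"]) auto
      next
        case 4
        obtain c where c: "c < x" "openin T {c<..x}" "\<forall>z. c < z \<and> z < x \<longrightarrow> \<not> L z \<and> \<not> R z"
          using Ronly[OF 4, of UNIV] top by (metis UNIV_I openin_topspace)
        have "{c<..x} \<inter> {x-r<..} \<subseteq> S"
        proof
          fix y assume y: "y \<in> {c<..x} \<inter> {x-r<..}"
          have "\<not> cut x y"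
          proof
            assume "cut x y"
            then obtain w where w: "(min x y < w \<and> w \<le> max x y \<and> L w) \<or> (min x y \<le> w \<and> w < max x y \<and> R w)"
              unfolding cut_def by blast
            then have "(c < w \<and> w < x) \<or> (w = x \<and> L w)" using y by (auto simp: min_def max_def split: if_splits)
            then show False using c(3) 4 w by blast
          qed
          then show "y \<in> S" using rS y by auto
        qed
        moreover have "openin T ({c<..x} \<inter> {x-r<..})" using openin_inter_open[OF c(2)] by simp
        ultimately show ?thesis using c(1) r(1) by (intro exI[of _ "{c<..x} \<inter> {x-r<..}"]) auto
      qed
    qed
  next
    assume S: "openin T S"
    show "S \<subseteq> UNIV \<and> (\<forall>x. x \<in> S \<longrightarrow> (\<exists>r>0. Metric_space.mball UNIV dd x r \<subseteq> S))"
    proof (intro conjI allI impI)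
      fix x assume x: "x \<in> S"
      consider "\<not> L x" "\<not> R x" | "L x" "R x" | "L x" "\<not> R x" | "R x" "\<not> L x" by blast
      then show "\<exists>r>0. Metric_space.mball UNIV dd x r \<subseteq> S"
      proof cases
        case 1
        obtain e where e: "e>0" "{x-e<..<x+e} \<subseteq> S" using ball_in[OF 1 S x] by blast
        have "Metric_space.mball UNIV dd x (min e 1) \<subseteq> S"
          using e mball_eq[of "min e 1" x] by (force simp: subset_iff abs_less_iff)
        then show ?thesis using e(1) by (intro exI[of _ "min e 1"]) auto
      next
        case 2
        have "Metric_space.mball UNIV dd x 1 \<subseteq> S"
        proof
          fix y assume "y \<in> Metric_space.mball UNIV dd x 1"
          then have "\<not> cut x y" using mball_eq[of 1 x] by auto
          then have "y = x" using 2 unfolding cut_def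
            by (cases "y < x"; cases "x < y") (auto simp: min_def max_def)
          then show "y \<in> S" using x by simp
        qed
        then show ?thesis by (intro exI[of _ 1]) auto
      next
        case 3
        obtain c where c: "c > x" "{x..c} \<subseteq> S" using Lonly[OF 3 S x] by blast
        have "Metric_space.mball UNIV dd x (min (c-x) 1) \<subseteq> S"
        proof
          fix y assume "y \<in> Metric_space.mball UNIV dd x (min (c-x) 1)"
          then have y: "\<bar>x - y\<bar> < min (c-x) 1" "\<not> cut x y" using mball_eq[of "min (c-x) 1" x] c(1) by auto
          have "\<not> y < x" using y(2) 3 unfolding cut_def by (auto simp: min_def max_def)
          then show "y \<in> S" using y(1) c(2) by auto
        qed
        then show ?thesis using c(1) by (intro exI[of _ "min (c-x) 1"]) auto
      next
        case 4
        obtain c where c: "c < x" "{c..x} \<subseteq> S" using Ronly[OF 4 S x] by blast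
        have "Metric_space.mball UNIV dd x (min (x-c) 1) \<subseteq> S"
        proof
          fix y assume "y \<in> Metric_space.mball UNIV dd x (min (x-c) 1)"
          then have y: "\<bar>x - y\<bar> < min (x-c) 1" "\<not> cut x y" using mball_eq[of "min (x-c) 1" x] c(1) by auto
          have "\<not> x < y" using y(2) 4 unfolding cut_def by (auto simp: min_def max_def)
          then show "y \<in> S" using y(1) c(2) by auto
        qed
        then show ?thesis using c(1) by (intro exI[of _ "min (x-c) 1"]) auto
      qed
    qed simp
  qed
qed

lemma metrizable: "metrizable_space T"
  unfolding metrizable_space_def using metric mtop_eq by metis

lemma countable_Lonly: "countable {x. L x \<and> \<not> R x}"
proof -
  define P where "P x q \<longleftrightarrow> q \<in> \<rat> \<and> x < q \<and> (\<forall>z. x < z \<and> z < q \<longrightarrow> \<not> L z \<and> \<not> R z)" for x q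
  define f where "f x = (SOME q. P x q)" for x
  have Pf: "P x (f x)" if xx: "L x" "\<not> R x" for x
  proof -
    obtain c where c: "c > x" "\<forall>z. x < z \<and> z < c \<longrightarrow> \<not> L z \<and> \<not> R z"
      using Lonly[OF xx, of UNIV] top by (metis UNIV_I openin_topspace)
    obtain q where "q \<in> \<rat>" "x < q" "q < c" using Rats_dense_in_real[OF c(1)] by blast
    then have "P x q" using c unfolding P_def by auto
    then show ?thesis unfolding f_def by (rule someI)
  qed
  have "inj_on f {x. L x \<and> \<not> R x}"
  proof (rule inj_onI)
    fix x y assume x: "x \<in> {x. L x \<and> \<not> R x}" and y: "y \<in> {x. L x \<and> \<not> R x}" and e: "f x = f y"
    have px: "P x (f x)" and py: "P y (f y)" using Pf x y by auto
    show "x = y"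
    proof (rule ccontr)
      assume "x \<noteq> y"
      then consider "x < y" | "y < x" by linarith
      then show False
      proof cases
        case 1
        have "y < f x" using py e unfolding P_def by simp
        then have "\<not> L y" using px 1 unfolding P_def by blast
        then show False using y by simp
      next
        case 2
        have "x < f y" using px e unfolding P_def by simp
        then have "\<not> L x" using py 2 unfolding P_def by blast
        then show False using x by simp
      qed
    qed
  qed
  moreover have "countable (f ` {x. L x \<and> \<not> R x})"
  proof (rule countable_subset)
    show "f ` {x. L x \<and> \<not> R x} \<subseteq> \<rat>"
    proof (rule image_subsetI)
      fix x assume "x \<in> {x. L x \<and> \<not> R x}"
      then have "P x (f x)" using Pf by blast
      then show "f x \<in> \<rat>" unfolding P_def by blast
    qed
  qed (rule countable_rat)
  ultimately show ?thesis using countable_image_inj_on by blast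
qed

lemma countable_Ronly: "countable {x. R x \<and> \<not> L x}"
proof -
  define P where "P x q \<longleftrightarrow> q \<in> \<rat> \<and> q < x \<and> (\<forall>z. q < z \<and> z < x \<longrightarrow> \<not> L z \<and> \<not> R z)" for x q
  define f where "f x = (SOME q. P x q)" for x
  have Pf: "P x (f x)" if xx: "R x" "\<not> L x" for x
  proof -
    obtain c where c: "c < x" "\<forall>z. c < z \<and> z < x \<longrightarrow> \<not> L z \<and> \<not> R z"
      using Ronly[OF xx, of UNIV] top by (metis UNIV_I openin_topspace)
    obtain q where "q \<in> \<rat>" "c < q" "q < x" using Rats_dense_in_real[OF c(1)] by blast
    then have "P x q" using c unfolding P_def by auto
    then show ?thesis unfolding f_def by (rule someI)
  qed
  have "inj_on f {x. R x \<and> \<not> L x}"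
  proof (rule inj_onI)
    fix x y assume x: "x \<in> {x. R x \<and> \<not> L x}" and y: "y \<in> {x. R x \<and> \<not> L x}" and e: "f x = f y"
    have px: "P x (f x)" and py: "P y (f y)" using Pf x y by auto
    show "x = y"
    proof (rule ccontr)
      assume "x \<noteq> y"
      then consider "x < y" | "y < x" by linarith
      then show False
      proof cases
        case 1
        have "f y < x" using px e unfolding P_def by simp
        then have "\<not> R x" using py 1 unfolding P_def by blast
        then show False using x by simp
      next
        case 2
        have "f x < y" using py e unfolding P_def by simp
        then have "\<not> R y" using px 2 unfolding P_def by blast
        then show False using y by simp
      qed
    qed
  qed
  moreover have "countable (f ` {x. R x \<and> \<not> L x})"
  proof (rule countable_subset)
    show "f ` {x. R x \<and> \<not> L x} \<subseteq> \<rat>"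
    proof (rule image_subsetI)
      fix x assume "x \<in> {x. R x \<and> \<not> L x}"
      then have "P x (f x)" using Pf by blast
      then show "f x \<in> \<rat>" unfolding P_def by blast
    qed
  qed (rule countable_rat)
  ultimately show ?thesis using countable_image_inj_on by blast
qed

lemma G_split: "G = {x. L x \<and> R x} \<union> {x. L x \<and> \<not> R x} \<union> {x. R x \<and> \<not> L x}"
  unfolding G_def by auto

lemma sc_imp: "second_countable T \<Longrightarrow> countable G"
proof -
  assume "second_countable T"
  then obtain B where B: "countable B" "\<forall>V\<in>B. openin T V"
    "\<forall>U x. openin T U \<and> x \<in> U \<longrightarrow> (\<exists>V\<in>B. x \<in> V \<and> V \<subseteq> U)"
    unfolding second_countable_def by blast
  have "{x. L x \<and> R x} \<subseteq> the_elem ` B"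
  proof
    fix x assume "x \<in> {x. L x \<and> R x}"
    then have "openin T {x}" using LR_open by auto
    then obtain V where "V \<in> B" "x \<in> V" "V \<subseteq> {x}" using B(3) by blast
    then have "V = {x}" by auto
    then show "x \<in> the_elem ` B" using \<open>V \<in> B\<close> by (metis image_eqI the_elem_eq)
  qed
  then have "countable {x. L x \<and> R x}" by (rule countable_subset) (rule countable_image[OF B(1)])
  then show ?thesis unfolding G_split using countable_Lonly countable_Ronly by (intro countable_Un)
qed

lemma imp_sc: "countable G \<Longrightarrow> second_countable T"
proof -
  assume cG: "countable G"
  define F where "F = (\<lambda>(a,b). {a<..<b}) ` (\<rat> \<times> \<rat>) \<union> (\<lambda>(x,q). {x..<q}) ` (G \<times> \<rat>)
     \<union> (\<lambda>(x,q). {q<..x}) ` (G \<times> \<rat>) \<union> (\<lambda>x. {x}) ` G"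
  have cF: "countable F" unfolding F_def
    by (intro countable_Un countable_image countable_SIGMA countable_rat cG)
  define B where "B = {V \<in> F. openin T V}"
  have "B \<subseteq> F" unfolding B_def by blast
  then have "countable B" using cF countable_subset by blast
  moreover have "\<forall>V\<in>B. openin T V" unfolding B_def by auto
  moreover have "\<forall>U x. openin T U \<and> x \<in> U \<longrightarrow> (\<exists>V\<in>B. x \<in> V \<and> V \<subseteq> U)"
  proof (intro allI impI)
    fix U x assume Ux: "openin T U \<and> x \<in> U"
    then have U: "openin T U" "x \<in> U" by auto
    consider "\<not> L x" "\<not> R x" | "L x" "R x" | "L x" "\<not> R x" | "R x" "\<not> L x" by blast
    then show "\<exists>V\<in>B. x \<in> V \<and> V \<subseteq> U"
    proof cases
      case 1
      obtain e where e: "e>0" "{x-e<..<x+e} \<subseteq> U" using ball_in[OF 1 U] by blast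
      obtain a where a: "a \<in> \<rat>" "x - e < a" "a < x" using Rats_dense_in_real[of "x-e" x] e(1) by auto
      obtain b where b: "b \<in> \<rat>" "x < b" "b < x + e" using Rats_dense_in_real[of x "x+e"] e(1) by auto
      have "{a<..<b} \<in> (\<lambda>(a,b). {a<..<b}) ` (\<rat> \<times> \<rat>)"
        using a(1) b(1) by (intro image_eqI[where x="(a,b)"]) auto
      then have "{a<..<b} \<in> F" unfolding F_def by (intro UnI1)
      moreover have "openin T {a<..<b}" by (rule opn) simp
      ultimately have "{a<..<b} \<in> B" unfolding B_def by blast
      moreover have "{a<..<b} \<subseteq> U" using e(2) a b by auto
      ultimately show ?thesis using a b by (intro bexI[of _ "{a<..<b}"]) auto
    next
      case 2
      have "x \<in> G" using 2 by (simp add: G_def)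
      then have "{x} \<in> F" unfolding F_def by (intro UnI2 imageI)
      then have "{x} \<in> B" using LR_open[OF 2] unfolding B_def by blast
      then show ?thesis using U by auto
    next
      case 3
      obtain c where c: "c > x" "{x..c} \<subseteq> U" using Lonly[OF 3 U] by blast
      obtain c2 where c2: "c2 > x" "openin T {x..<c2}"
        using Lonly[OF 3, of UNIV] top by (metis UNIV_I openin_topspace)
      obtain q where q: "q \<in> \<rat>" "x < q" "q < min c c2" using Rats_dense_in_real[of x "min c c2"] c c2 by auto
      have "{x..<c2} \<inter> {..<q} = {x..<q}" using q by auto
      then have "openin T {x..<q}" using openin_inter_open[OF c2(2), of "{..<q}"] by simp
      moreover have "{x..<q} \<in> F"
      proof -
        have "(x,q) \<in> G \<times> \<rat>" using q(1) 3 by (simp add: G_def)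
        then have "{x..<q} \<in> (\<lambda>(x,q). {x..<q}) ` (G \<times> \<rat>)" by (intro image_eqI[where x="(x,q)"]) auto
        then show ?thesis unfolding F_def by (intro UnI1 UnI2)
      qed
      ultimately have "{x..<q} \<in> B" unfolding B_def by blast
      moreover have "{x..<q} \<subseteq> U" using c(2) q by auto
      ultimately show ?thesis using q by (intro bexI[of _ "{x..<q}"]) auto
    next
      case 4
      obtain c where c: "c < x" "{c..x} \<subseteq> U" using Ronly[OF 4 U] by blast
      obtain c2 where c2: "c2 < x" "openin T {c2<..x}"
        using Ronly[OF 4, of UNIV] top by (metis UNIV_I openin_topspace)
      obtain q where q: "q \<in> \<rat>" "max c c2 < q" "q < x" using Rats_dense_in_real[of "max c c2" x] c c2 by auto
      have "{c2<..x} \<inter> {q<..} = {q<..x}" using q by auto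
      then have "openin T {q<..x}" using openin_inter_open[OF c2(2), of "{q<..}"] by simp
      moreover have "{q<..x} \<in> F"
      proof -
        have "(x,q) \<in> G \<times> \<rat>" using q(1) 4 by (simp add: G_def)
        then have "{q<..x} \<in> (\<lambda>(x,q). {q<..x}) ` (G \<times> \<rat>)" by (intro image_eqI[where x="(x,q)"]) auto
        then show ?thesis unfolding F_def by (intro UnI1 UnI2)
      qed
      ultimately have "{q<..x} \<in> B" unfolding B_def by blast
      moreover have "{q<..x} \<subseteq> U" using c(2) q by auto
      ultimately show ?thesis using q by (intro bexI[of _ "{q<..x}"]) auto
    qed
  qed
  ultimately show ?thesis unfolding second_countable_def by blast
qed

end

theorem proposition2:
  fixes \<tau> :: "real topology"
  assumes "finer_than_euclidean \<tau>"
    and "locally_connected_space \<tau>"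
  shows "locally_compact_space \<tau> \<and> completely_metrizable_space \<tau> \<and> closed (Gamma \<tau>)
         \<and> (countable (Gamma \<tau>) \<longleftrightarrow> second_countable \<tau>)"
proof -
  interpret LCR \<tau> using assms by (rule LCR.intro)
  have "completely_metrizable_space \<tau>"
    using locally_compact_imp_completely_metrizable_space[OF metrizable loc_compact] .
  moreover have "countable (Gamma \<tau>) \<longleftrightarrow> second_countable \<tau>"
    unfolding Gamma_eq using sc_imp imp_sc by blast
  ultimately show ?thesis
    using loc_compact G_closed unfolding Gamma_eq by blast
qed

end
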